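(* Let $k\in\mathbb{Z}$, let $m$ be an odd positive integer, and let $p>1$ be an odd integer. Then $$m^{p}T_{p}^{(k)}(1,m)=\sum_{i=0}^{p}\binom{p}{i}E_{p-i}^{(k)}(1)E_{i}m^{p-i}+\sum_{i=1}^{p}\binom{p}{i-1}\big(E_{p-i+1}^{(k)}(1)-E_{p-i+1}^{(k)}\big)m^{p-i}E_{i}+2\sum_{\nu=0}^{p}\binom{p}{\nu}E_{\nu}^{(k)}E_{p+1-\nu}m^{\nu-1}.$$
   Context: Euler polynomials $E_n(x)$ are defined by $\frac{2}{e^t+1}e^{xt}=\sum_{n=0}^{\infty}E_n(x)\frac{t^n}{n!}$ and $E_n=E_n(0)$. For $k\in\mathbb{Z}$, $\mathrm{Ei}_k(x)=\sum_{n=1}^{\infty}\frac{x^n}{n^k(n-1)!}$; the poly-Genocchi polynomials $G_n^{(k)}(x)$ are defined by $\frac{2\,\mathrm{Ei}_k(\log(1+t))}{e^t+1}e^{xt}=\sum_{n=0}^{\infty}G_n^{(k)}(x)\frac{t^n}{n!}$; the poly-Euler polynomials are $E_n^{(k)}(x)=\frac{G_{n+1}^{(k)}(x)}{n+1}$ ($n\ge0$), $E_n^{(k)}=E_n^{(k)}(0)$, and the poly-Euler functions are $\overline{E}_n^{(k)}(x)=E_n^{(k)}(x-[x])$, where $[x]$ is the greatest integer $\le x$. For positive integers $h,m,p$, the poly-Dedekind type DC sum is $T_p^{(k)}(h,m)=2\sum_{\mu=1}^{m-1}(-1)^{\mu}\frac{\mu}{m}\overline{E}_p^{(k)}\big(\frac{h\mu}{m}\big)$.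 *)

theory Defs
  imports "HOL-Computational_Algebra.Formal_Power_Series"
begin

definition euler_poly :: "nat \<Rightarrow> real \<Rightarrow> real" where
  "euler_poly n x = fact n * fps_nth ((fps_const 2 / (fps_exp 1 + 1)) * fps_exp x) n"

definition euler_num :: "nat \<Rightarrow> real" where
  "euler_num n = euler_poly n 0"

definition Ei_fps :: "int \<Rightarrow> real fps" where
  "Ei_fps k = Abs_fps (\<lambda>n. if n = 0 then 0 else 1 / ((real n) powi k * fact (n - 1)))"

(* poly-Genocchi polynomials:
   2 Ei_k(log(1+t))/(e^t+1) e^{xt} = sum G_n^{(k)}(x) t^n/n! ; fps_ln 1 = log(1+t) *)
definition poly_genocchi :: "int \<Rightarrow> nat \<Rightarrow> real \<Rightarrow> real" where
  "poly_genocchi k n x =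
     fact n * fps_nth ((fps_const 2 * (Ei_fps k oo fps_ln 1) / (fps_exp 1 + 1)) * fps_exp x) n"

definition poly_euler :: "int \<Rightarrow> nat \<Rightarrow> real \<Rightarrow> real" where
  "poly_euler k n x = poly_genocchi k (n + 1) x / real (n + 1)"

definition poly_euler_num :: "int \<Rightarrow> nat \<Rightarrow> real" where
  "poly_euler_num k n = poly_euler k n 0"

definition poly_euler_fun :: "int \<Rightarrow> nat \<Rightarrow> real \<Rightarrow> real" where
  "poly_euler_fun k n x = poly_euler k n (x - of_int \<lfloor>x\<rfloor>)"

definition poly_DC_sum :: "int \<Rightarrow> nat \<Rightarrow> nat \<Rightarrow> nat \<Rightarrow> real" where
  "poly_DC_sum k p h m =
     2 * (\<Sum>\<mu>=1..m-1. (-1) ^ \<mu> * (real \<mu> / real m) * poly_euler_fun k p (real h * real \<mu> / real m))"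

end

theory Submission imports Defs begin

lemma appell_fps:
  fixes A :: "real fps"
  shows "fact n * fps_nth (A * fps_exp x) n = (\<Sum>j\<le>n. real (n choose j) * (fact j * fps_nth A j) * x ^ (n - j))"
proof -
  have "fact n * fps_nth (A * fps_exp x) n = (\<Sum>j=0..n. fact n * (fps_nth A j * (x ^ (n - j) / fact (n - j))))"
    by (simp add: fps_mult_nth sum_distrib_left)
  also have "\<dots> = (\<Sum>j\<le>n. real (n choose j) * (fact j * fps_nth A j) * x ^ (n - j))"
  proof (rule sum.cong)
    fix j assume "j \<in> {..n}"
    hence j: "j \<le> n" by simp
    have "real (n choose j) = fact n / (fact j * fact (n - j))"
      using j by (simp add: binomial_fact)
    thus "fact n * (fps_nth A j * (x ^ (n - j) / fact (n - j))) = real (n choose j) * (fact j * fps_nth A j) * x ^ (n - j)"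
      by (simp add: field_simps)
  qed (auto simp: atLeast0AtMost)
  finally show ?thesis .
qed

definition Bf :: "real fps" where "Bf = fps_const 2 / (fps_exp 1 + 1)"
definition Af :: "int \<Rightarrow> real fps" where "Af k = fps_const 2 * (Ei_fps k oo fps_ln 1) / (fps_exp 1 + 1)"
definition cc :: "int \<Rightarrow> nat \<Rightarrow> real" where "cc k i = fact (Suc i) * fps_nth (Af k) (Suc i) / real (Suc i)"

lemma Af0: "fps_nth (Af k) 0 = 0"
  by (simp add: Af_def Ei_fps_def)

lemma euler_poly_appell: "euler_poly n x = (\<Sum>j\<le>n. real (n choose j) * euler_num j * x ^ (n - j))"
proof -
  have en: "euler_num j = fact j * fps_nth Bf j" for j
    unfolding euler_num_def euler_poly_def Bf_def[symmetric] by simp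
  show ?thesis unfolding euler_poly_def Bf_def[symmetric] appell_fps en ..
qed

lemma genocchi_appell: "poly_genocchi k n x = (\<Sum>j\<le>n. real (n choose j) * (fact j * fps_nth (Af k) j) * x ^ (n - j))"
  unfolding poly_genocchi_def Af_def[symmetric] appell_fps ..

lemma poly_euler_appell: "poly_euler k n x = (\<Sum>i\<le>n. real (n choose i) * cc k i * x ^ (n - i))"
proof -
  have "poly_euler k n x = (\<Sum>j\<le>Suc n. real (Suc n choose j) * (fact j * fps_nth (Af k) j) * x ^ (Suc n - j)) / real (Suc n)"
    by (simp add: poly_euler_def genocchi_appell)
  also have "\<dots> = (\<Sum>i\<le>n. real (Suc n choose Suc i) * (fact (Suc i) * fps_nth (Af k) (Suc i)) * x ^ (n - i)) / real (Suc n)"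
    by (subst sum.atMost_Suc_shift) (simp add: Af0)
  also have "\<dots> = (\<Sum>i\<le>n. real (n choose i) * cc k i * x ^ (n - i))"
    unfolding sum_divide_distrib
  proof (rule sum.cong)
    fix i assume "i \<in> {..n}"
    have "real (Suc n) * real (n choose i) = real (Suc n choose Suc i) * real (Suc i)"
      using Suc_times_binomial_eq[of n i] by (metis of_nat_mult)
    hence "real (Suc n choose Suc i) = real (Suc n) * real (n choose i) / real (Suc i)"
      by (simp add: field_simps)
    note h = this
    show "real (Suc n choose Suc i) * (fact (Suc i) * fps_nth (Af k) (Suc i)) * x ^ (n - i) / real (Suc n) =
         real (n choose i) * cc k i * x ^ (n - i)"
      unfolding h cc_def by (simp add: field_simps del: of_nat_Suc fact_Suc)
  qed simp
  finally show ?thesis .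
qed

lemma poly_euler_num_cc: "poly_euler_num k i = cc k i"
proof -
  have "poly_euler_num k i = (\<Sum>j\<le>i. real (i choose j) * cc k j * 0 ^ (i - j))"
    by (simp add: poly_euler_num_def poly_euler_appell)
  also have "\<dots> = (\<Sum>j\<in>{i}. real (i choose j) * cc k j * 0 ^ (i - j))"
    by (rule sum.mono_neutral_right) auto
  finally show ?thesis by simp
qed

lemma Bf_mult: "Bf * (fps_exp 1 + 1) = 2"
proof -
  have "fps_nth (fps_exp 1 + 1 :: real fps) 0 \<noteq> 0" by simp
  hence "Bf * (fps_exp 1 + 1) = fps_const 2 * (inverse (fps_exp 1 + 1) * (fps_exp 1 + 1))"
    unfolding Bf_def by (simp add: fps_divide_unit mult.assoc)
  also have "\<dots> = 2" using inverse_mult_eq_1[OF \<open>fps_nth _ 0 \<noteq> 0\<close>]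
    by (simp add: numeral_fps_const)
  finally show ?thesis .
qed

lemma euler_shift: "euler_poly n (x + 1) + euler_poly n x = 2 * x ^ n"
proof -
  have "Bf * fps_exp (x + 1) + Bf * fps_exp x = Bf * (fps_exp 1 + 1) * fps_exp x"
    by (simp add: fps_exp_add_mult algebra_simps)
  also have "\<dots> = 2 * fps_exp x" by (simp add: Bf_mult)
  finally have "fps_nth (Bf * fps_exp (x + 1)) n + fps_nth (Bf * fps_exp x) n = fps_nth (2 * fps_exp x) n"
    by (metis fps_add_nth)
  hence "fact n * fps_nth (Bf * fps_exp (x + 1)) n + fact n * fps_nth (Bf * fps_exp x) n = fact n * fps_nth (2 * fps_exp x) n"
    by (metis distrib_left)
  moreover have "fps_nth (2 * fps_exp x) n = 2 * (x ^ n / fact n)"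
    by (simp add: numeral_fps_const)
  ultimately show ?thesis unfolding euler_poly_def Bf_def[symmetric] by simp
qed

lemma alt_sum: "(\<Sum>\<mu><M. (-1) ^ \<mu> * (2 * real \<mu> ^ n)) = euler_poly n 0 - (-1) ^ M * euler_poly n (real M)"
proof (induction M)
  case 0 then show ?case by simp
next
  case (Suc M)
  have "(-1) ^ M * (2 * real M ^ n) = (-1) ^ M * euler_poly n (real M + 1) + (-1) ^ M * euler_poly n (real M)"
    by (simp add: euler_shift distrib_left[symmetric])
  with Suc show ?case by (simp add: add.commute)
qed


lemma binom_sym2:
  assumes "i + j \<le> (p::nat)"
  shows "(p choose i) * ((p - i) choose j) = (p choose j) * ((p - j) choose i)"
proof -
  have "(p choose (i + j)) * ((i + j) choose i) = (p choose i) * ((p - i) choose j)"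
    using choose_mult[of i "i + j" p] assms by simp
  moreover have "(p choose (i + j)) * ((i + j) choose j) = (p choose j) * ((p - j) choose i)"
    using choose_mult[of j "i + j" p] assms by (simp add: add.commute)
  moreover have "((i + j) choose i) = ((i + j) choose j)"
    using binomial_symmetric[of i "i + j"] by simp
  ultimately show ?thesis by simp
qed

lemma binom_key:
  assumes "i + j \<le> (p::nat)"
  shows "real (p choose i) * real ((p + 1 - i) choose j) =
    real (p choose j) * real ((p - j) choose i) +
    (if j = 0 then 0 else real (p choose (j - 1)) * real ((p - j + 1) choose i))"
proof (cases j)
  case 0 then show ?thesis by simp
next
  case (Suc j')
  have s: "p + 1 - i = Suc (p - i)" using assms by simp
  have "(p choose i) * ((p + 1 - i) choose j) = (p choose i) * ((p - i) choose j') + (p choose i) * ((p - i) choose j)"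
    unfolding s Suc by (simp add: distrib_left)
  also have "(p choose i) * ((p - i) choose j') = (p choose j') * ((p - j') choose i)"
    using binom_sym2[of i j' p] assms Suc by simp
  also have "(p choose i) * ((p - i) choose j) = (p choose j) * ((p - j) choose i)"
    using binom_sym2[of i j p] assms by simp
  finally have eq0: "(p choose i) * ((p + 1 - i) choose j) = (p choose j') * ((p - j') choose i) + (p choose j) * ((p - j) choose i)" .
  have pj: "p - j + 1 = p - j'" using assms Suc by simp
  have eq: "(p choose i) * ((p + 1 - i) choose j) = (p choose j) * ((p - j) choose i) + (p choose (j - 1)) * ((p - j + 1) choose i)"
  proof -
    have jm: "j - 1 = j'" using Suc by simp
    show ?thesis unfolding pj jm using eq0 by (simp only: add.commute)
  qed
  have "real ((p choose i) * ((p + 1 - i) choose j)) = real ((p choose j) * ((p - j) choose i) + (p choose (j - 1)) * ((p - j + 1) choose i))"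
    by (simp only: eq)
  then have "real (p choose i) * real ((p + 1 - i) choose j) = real (p choose j) * real ((p - j) choose i) + real (p choose (j - 1)) * real ((p - j + 1) choose i)"
    by (simp only: of_nat_mult of_nat_add)
  then show ?thesis using Suc by simp
qed

lemma sum_ext_tri:
  assumes "i \<le> (p::nat)"
  shows "(\<Sum>j\<le>p-i. g j) = (\<Sum>j\<le>p. if i + j \<le> p then g j else 0)"
proof -
  have "(\<Sum>j\<le>p. if i + j \<le> p then g j else 0) = sum g {j \<in> {..p}. i + j \<le> p}"
    by (rule sum.inter_filter[symmetric]) simp
  also have "{j \<in> {..p}. i + j \<le> p} = {..p-i}" using assms by auto
  finally show ?thesis by simp
qed


theorem theorem12:
  fixes k :: int and m p :: nat
  assumes "odd m" and "m > 0" and "odd p" and "p > 1"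
  shows "real m ^ p * poly_DC_sum k p 1 m =
      (\<Sum>i=0..p. real (p choose i) * poly_euler k (p - i) 1 * euler_num i * real m ^ (p - i))
    + (\<Sum>i=1..p. real (p choose (i - 1)) *
         (poly_euler k (p - i + 1) 1 - poly_euler_num k (p - i + 1)) * real m ^ (p - i) * euler_num i)
    + 2 * (\<Sum>\<nu>=0..p. real (p choose \<nu>) * poly_euler_num k \<nu> * euler_num (p + 1 - \<nu>)
         * real m powi (int \<nu> - 1))"
proof -
  define M where "M = real m"
  have M0: "M > 0" using assms(2) by (simp add: M_def)
  define c where "c = cc k"
  define e where "e = euler_num"
  define W where "W i j = (if i + j \<le> p then real (p choose i) * real ((p+1-i) choose j) * c i * e j * M^(p-j) else 0)" for i j
  define D where "D i = real (p choose i) * c i * e (p + 1 - i) * M powi (int i - 1)" for i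
  have P1: "poly_euler k n 1 = (\<Sum>i\<le>n. real (n choose i) * c i)" for n
    by (simp add: poly_euler_appell c_def)
  have Pn: "poly_euler_num k i = c i" for i by (simp add: poly_euler_num_cc c_def)
  have powi1: "M powi (int i - 1) = M ^ i / M" for i
    using M0 by (simp add: power_int_diff)
  have fl: "poly_euler_fun k p (real \<mu> / real m) = poly_euler k p (real \<mu> / M)"
    if "\<mu> \<in> {1..m-1}" for \<mu>
  proof -
    have "\<lfloor>real \<mu> / real m\<rfloor> = 0" using that assms(2) by (auto simp: floor_eq_iff divide_less_eq)
    thus ?thesis by (simp add: poly_euler_fun_def M_def)
  qed
  have pw: "M^p * (2 * ((-1)^\<mu> * (real \<mu> / M) * (real (p choose i) * c i * (real \<mu> / M)^(p-i)))) =
      real (p choose i) * c i * M powi (int i - 1) * ((-1)^\<mu> * (2 * real \<mu> ^ (p + 1 - i)))"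
    if "i \<le> p" for \<mu> i
  proof -
    have a: "M^p = M^i * M^(p-i)" using that by (simp add: power_add[symmetric])
    have b: "real \<mu> ^ (p + 1 - i) = real \<mu> * real \<mu> ^ (p - i)" using that by (simp add: Suc_diff_le)
    show ?thesis unfolding a b powi1 using M0 by (simp add: field_simps power_divide)
  qed
  have L1: "M^p * poly_DC_sum k p 1 m = (\<Sum>i\<le>p. real (p choose i) * c i * M powi (int i - 1) *
               (\<Sum>\<mu><m. (-1)^\<mu> * (2 * real \<mu> ^ (p + 1 - i))))"
  proof -
    have "M^p * poly_DC_sum k p 1 m = (\<Sum>\<mu>=1..m-1. M^p * (2 * ((-1)^\<mu> * (real \<mu> / M) * poly_euler k p (real \<mu> / M))))"
      unfolding poly_DC_sum_def sum_distrib_left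
      by (rule sum.cong) (simp_all add: fl M_def)
    also have "\<dots> = (\<Sum>\<mu>=1..m-1. \<Sum>i\<le>p. real (p choose i) * c i * M powi (int i - 1) * ((-1)^\<mu> * (2 * real \<mu> ^ (p + 1 - i))))"
      unfolding poly_euler_appell c_def[symmetric] sum_distrib_left
      by (rule sum.cong, simp, rule sum.cong, simp, rule pw, simp)
    also have "\<dots> = (\<Sum>i\<le>p. \<Sum>\<mu>=1..m-1. real (p choose i) * c i * M powi (int i - 1) * ((-1)^\<mu> * (2 * real \<mu> ^ (p + 1 - i))))"
      by (rule sum.swap)
    also have "\<dots> = (\<Sum>i\<le>p. real (p choose i) * c i * M powi (int i - 1) * (\<Sum>\<mu><m. (-1)^\<mu> * (2 * real \<mu> ^ (p + 1 - i))))"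
    proof (rule sum.cong)
      fix i assume i: "i \<in> {..p}"
      have "(\<Sum>\<mu><m. (-1)^\<mu> * (2 * real \<mu> ^ (p + 1 - i))) = (\<Sum>\<mu>=1..m-1. (-1)^\<mu> * (2 * real \<mu> ^ (p + 1 - i)))"
        using i by (intro sum.mono_neutral_right) auto
      thus "(\<Sum>\<mu>=1..m-1. real (p choose i) * c i * M powi (int i - 1) * ((-1)^\<mu> * (2 * real \<mu> ^ (p + 1 - i)))) =
         real (p choose i) * c i * M powi (int i - 1) * (\<Sum>\<mu><m. (-1)^\<mu> * (2 * real \<mu> ^ (p + 1 - i)))"
        by (simp add: sum_distrib_left)
    qed simp
    finally show ?thesis .
  qed
  have L2: "(\<Sum>\<mu><m. (-1)^\<mu> * (2 * real \<mu> ^ n)) = e n + euler_poly n M" for n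
    using alt_sum[of n m] assms(1) by (simp add: e_def euler_num_def M_def)
  have Mpow: "M powi (int i - 1) * M^(p+1-i-j) = M^(p-j)" if "i + j \<le> p" for i j
  proof -
    have "M powi (int i - 1) * M^(p+1-i-j) = M powi (int i - 1) * M powi (int (p+1-i-j))" by simp
    also have "\<dots> = M powi (int i - 1 + int (p+1-i-j))" using M0 by (simp add: power_int_add)
    also have "int i - 1 + int (p+1-i-j) = int (p - j)" using that by simp
    finally show ?thesis by simp
  qed
  have L3: "real (p choose i) * c i * M powi (int i - 1) * (e (p + 1 - i) + euler_poly (p + 1 - i) M)
      = 2 * D i + (\<Sum>j\<le>p. W i j)" if "i \<le> p" for i
  proof -
    have s: "p + 1 - i = Suc (p - i)" using that by simp
    have "euler_poly (p + 1 - i) M = (\<Sum>j\<le>p - i. real ((p+1-i) choose j) * e j * M ^ (p + 1 - i - j)) + e (p + 1 - i)"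
      unfolding euler_poly_appell e_def[symmetric] s by (simp add: sum.atMost_Suc)
    hence "real (p choose i) * c i * M powi (int i - 1) * (e (p + 1 - i) + euler_poly (p + 1 - i) M)
       = 2 * D i + (\<Sum>j\<le>p - i. real (p choose i) * real ((p+1-i) choose j) * c i * e j * (M powi (int i - 1) * M ^ (p + 1 - i - j)))"
      by (simp add: D_def algebra_simps sum_distrib_left)
    also have "(\<Sum>j\<le>p - i. real (p choose i) * real ((p+1-i) choose j) * c i * e j * (M powi (int i - 1) * M ^ (p + 1 - i - j)))
        = (\<Sum>j\<le>p. W i j)"
      unfolding sum_ext_tri[OF that] W_def by (rule sum.cong) (simp_all add: Mpow[simplified])
    finally show ?thesis .
  qed
  have LHS: "real m ^ p * poly_DC_sum k p 1 m = 2 * (\<Sum>i\<le>p. D i) + (\<Sum>i\<le>p. \<Sum>j\<le>p. W i j)"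
  proof -
    have "(\<Sum>i\<le>p. real (p choose i) * c i * M powi (int i - 1) * (e (p + 1 - i) + euler_poly (p + 1 - i) M))
       = (\<Sum>i\<le>p. 2 * D i + (\<Sum>j\<le>p. W i j))"
      by (rule sum.cong[OF refl], rule L3, simp)
    then show ?thesis unfolding M_def[symmetric] L1 L2 by (simp add: sum.distrib sum_distrib_left)
  qed
  have R3: "(\<Sum>\<nu>=0..p. real (p choose \<nu>) * poly_euler_num k \<nu> * euler_num (p + 1 - \<nu>) * real m powi (int \<nu> - 1))
     = (\<Sum>i\<le>p. D i)"
    by (simp add: D_def Pn e_def M_def atLeast0AtMost)
  have R1: "(\<Sum>i=0..p. real (p choose i) * poly_euler k (p - i) 1 * euler_num i * real m ^ (p - i))
     = (\<Sum>j\<le>p. \<Sum>i\<le>p. if j + i \<le> p then real (p choose j) * real ((p - j) choose i) * c i * e j * M^(p-j) else 0)"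
    unfolding atLeast0AtMost
  proof (rule sum.cong)
    fix j assume j: "j \<in> {..p}"
    show "real (p choose j) * poly_euler k (p - j) 1 * euler_num j * real m ^ (p - j) =
      (\<Sum>i\<le>p. if j + i \<le> p then real (p choose j) * real ((p - j) choose i) * c i * e j * M^(p-j) else 0)"
      using sum_ext_tri[of j p "\<lambda>i. real (p choose j) * real ((p - j) choose i) * c i * e j * M^(p-j)"] j
      by (simp add: P1 sum_distrib_left sum_distrib_right e_def M_def add.commute mult.assoc)
  qed simp
  have R2: "(\<Sum>i=1..p. real (p choose (i - 1)) *
         (poly_euler k (p - i + 1) 1 - poly_euler_num k (p - i + 1)) * real m ^ (p - i) * euler_num i)
     = (\<Sum>j\<le>p. \<Sum>i\<le>p. if j + i \<le> p then (if j = 0 then 0 else real (p choose (j - 1)) * real ((p - j + 1) choose i)) * c i * e j * M^(p-j) else 0)"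
  proof -
    have "(\<Sum>i=1..p. real (p choose (i - 1)) *
         (poly_euler k (p - i + 1) 1 - poly_euler_num k (p - i + 1)) * real m ^ (p - i) * euler_num i)
       = (\<Sum>j\<in>{1..p}. \<Sum>i\<le>p. if j + i \<le> p then (if j = 0 then 0 else real (p choose (j - 1)) * real ((p - j + 1) choose i)) * c i * e j * M^(p-j) else 0)"
    proof (rule sum.cong)
      fix j assume j: "j \<in> {1..p}"
      have s: "p - j + 1 = Suc (p - j)" using j by simp
      have "poly_euler k (p - j + 1) 1 - poly_euler_num k (p - j + 1) = (\<Sum>i\<le>p - j. real ((p - j + 1) choose i) * c i)"
        unfolding s P1 Pn by (simp add: sum.atMost_Suc)
      then show "real (p choose (j - 1)) *
         (poly_euler k (p - j + 1) 1 - poly_euler_num k (p - j + 1)) * real m ^ (p - j) * euler_num j =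
         (\<Sum>i\<le>p. if j + i \<le> p then (if j = 0 then 0 else real (p choose (j - 1)) * real ((p - j + 1) choose i)) * c i * e j * M^(p-j) else 0)"
      proof -
        define A where "A i = real (p choose (j - 1)) * real ((p - j + 1) choose i) * c i * e j * M^(p-j)" for i
        have X: "(\<Sum>i\<le>p. if j + i \<le> p then (if j = 0 then 0 else real (p choose (j - 1)) * real ((p - j + 1) choose i)) * c i * e j * M^(p-j) else 0)
           = (\<Sum>i\<le>p - j. A i)"
        proof -
          have X0: "(\<Sum>i\<le>p-j. A i) = (\<Sum>i\<le>p. if j + i \<le> p then A i else 0)"
            using j by (intro sum_ext_tri) simp
          show ?thesis unfolding X0 using j by (intro sum.cong refl) (simp add: A_def)
        qed
        have Y: "real (p choose (j - 1)) *
         (poly_euler k (p - j + 1) 1 - poly_euler_num k (p - j + 1)) * real m ^ (p - j) * euler_num j = (\<Sum>i\<le>p - j. A i)"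
          unfolding A_def \<open>poly_euler k (p - j + 1) 1 - poly_euler_num k (p - j + 1) = _\<close>
          by (simp add: sum_distrib_left sum_distrib_right e_def M_def mult_ac)
        show ?thesis unfolding X Y ..
      qed
    qed simp
    also have "\<dots> = (\<Sum>j\<le>p. \<Sum>i\<le>p. if j + i \<le> p then (if j = 0 then 0 else real (p choose (j - 1)) * real ((p - j + 1) choose i)) * c i * e j * M^(p-j) else 0)"
      by (rule sum.mono_neutral_left) auto
    finally show ?thesis .
  qed
  have R12: "(\<Sum>j\<le>p. \<Sum>i\<le>p. if j + i \<le> p then real (p choose j) * real ((p - j) choose i) * c i * e j * M^(p-j) else 0)
     + (\<Sum>j\<le>p. \<Sum>i\<le>p. if j + i \<le> p then (if j = 0 then 0 else real (p choose (j - 1)) * real ((p - j + 1) choose i)) * c i * e j * M^(p-j) else 0)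
     = (\<Sum>i\<le>p. \<Sum>j\<le>p. W i j)"
  proof -
    have "(\<Sum>j\<le>p. \<Sum>i\<le>p. if j + i \<le> p then real (p choose j) * real ((p - j) choose i) * c i * e j * M^(p-j) else 0)
     + (\<Sum>j\<le>p. \<Sum>i\<le>p. if j + i \<le> p then (if j = 0 then 0 else real (p choose (j - 1)) * real ((p - j + 1) choose i)) * c i * e j * M^(p-j) else 0)
     = (\<Sum>j\<le>p. \<Sum>i\<le>p. W i j)"
      unfolding sum.distrib[symmetric]
    proof (intro sum.cong refl)
      fix j i
      show "(if j + i \<le> p then real (p choose j) * real ((p - j) choose i) * c i * e j * M^(p-j) else 0) +
            (if j + i \<le> p then (if j = 0 then 0 else real (p choose (j - 1)) * real ((p - j + 1) choose i)) * c i * e j * M^(p-j) else 0)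
            = W i j"
      proof (cases "i + j \<le> p")
        case True
        have "real (p choose i) * real ((p + 1 - i) choose j) * (c i * e j * M^(p-j)) =
           (real (p choose j) * real ((p - j) choose i) +
            (if j = 0 then 0 else real (p choose (j - 1)) * real ((p - j + 1) choose i))) * (c i * e j * M^(p-j))"
          by (simp only: binom_key[OF True])
        then show ?thesis using True by (simp add: W_def algebra_simps)
      next
        case False
        then show ?thesis by (simp add: W_def add.commute)
      qed
    qed
    also have "\<dots> = (\<Sum>i\<le>p. \<Sum>j\<le>p. W i j)" by (rule sum.swap)
    finally show ?thesis .
  qed
  show ?thesis unfolding LHS R1 R2 R3 using R12 by simp
qed

end
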